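(* Let $X$ be a $T_1$ space and $\mathcal{P}$ an ideal of closed subsets of $X$. Then $C(X)_\mathcal{P}$ is a regular ring (for every $f$ there is $g$ with $f=f^2g$) if and only if for every $Z\in Z_\mathcal{P}[X]$ there exists $P\in\mathcal{P}$ such that $Z\setminus P$ is a clopen subset of the subspace $X\setminus P$.
   Context: An ideal of closed subsets of $X$ is a family $\mathcal{P}$ of closed subsets closed under finite unions and under passing to closed subsets. $D_f$ is the set of discontinuity points of $f\in\mathbb{R}^X$; $C(X)_\mathcal{P}=\{f\in\mathbb{R}^X\colon\overline{D_f}\in\mathcal{P}\}$ with pointwise operations. For $f\in C(X)_\mathcal{P}$, $Z_\mathcal{P}(f)=\{x\colon f(x)=0\}$ and $Z_\mathcal{P}[X]$ is the set of all such zero sets. *)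

theory Defs
  imports "HOL-Analysis.Analysis"
begin

definition cont_at :: "'a topology \<Rightarrow> ('a \<Rightarrow> real) \<Rightarrow> 'a \<Rightarrow> bool" where
  "cont_at X f x \<longleftrightarrow>
     (\<forall>U. open U \<and> f x \<in> U \<longrightarrow> (\<exists>V. openin X V \<and> x \<in> V \<and> f ` V \<subseteq> U))"

definition disc_points :: "'a topology \<Rightarrow> ('a \<Rightarrow> real) \<Rightarrow> 'a set" where
  "disc_points X f = {x \<in> topspace X. \<not> cont_at X f x}"

definition closed_ideal :: "'a topology \<Rightarrow> 'a set set \<Rightarrow> bool" where
  "closed_ideal X \<P> \<longleftrightarrow>
     \<P> \<noteq> {} \<and> (\<forall>P\<in>\<P>. closedin X P) \<and>
     (\<forall>P\<in>\<P>. \<forall>Q\<in>\<P>. P \<union> Q \<in> \<P>) \<and>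
     (\<forall>P\<in>\<P>. \<forall>Q. closedin X Q \<and> Q \<subseteq> P \<longrightarrow> Q \<in> \<P>)"

text \<open>C(X)_P, with functions represented as total functions; only their values on
  topspace X matter.\<close>
definition CP :: "'a topology \<Rightarrow> 'a set set \<Rightarrow> ('a \<Rightarrow> real) set" where
  "CP X \<P> = {f. X closure_of (disc_points X f) \<in> \<P>}"

definition zero_set_P :: "'a topology \<Rightarrow> ('a \<Rightarrow> real) \<Rightarrow> 'a set" where
  "zero_set_P X f = {x \<in> topspace X. f x = 0}"

definition zero_sets_P :: "'a topology \<Rightarrow> 'a set set \<Rightarrow> 'a set set" where
  "zero_sets_P X \<P> = zero_set_P X ` CP X \<P>"

definition CP_regular :: "'a topology \<Rightarrow> 'a set set \<Rightarrow> bool" where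
  "CP_regular X \<P> \<longleftrightarrow>
     (\<forall>f\<in>CP X \<P>. \<exists>g\<in>CP X \<P>. \<forall>x\<in>topspace X. f x = (f x)^2 * g x)"

end

theory Submission
  imports Defs
begin

lemma cont_at_comp:
  assumes "cont_at X f x" "isCont h (f x)"
  shows "cont_at X (\<lambda>y. h (f y)) x"
  unfolding cont_at_def
proof (intro allI impI)
  fix U :: "real set" assume U: "open U \<and> h (f x) \<in> U"
  then obtain U' where U': "open U'" "f x \<in> U'" "\<forall>t\<in>U'. h t \<in> U"
    using assms(2) continuous_at_open by metis
  then obtain V where "openin X V" "x \<in> V" "f ` V \<subseteq> U'"
    using assms(1) unfolding cont_at_def by metis
  then show "\<exists>V. openin X V \<and> x \<in> V \<and> (\<lambda>y. h (f y)) ` V \<subseteq> U"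
    using U'(3) by (intro exI[of _ V]) auto
qed

lemma not_disc:
  assumes "x \<in> topspace X" "x \<notin> X closure_of (disc_points X f)"
  shows "cont_at X f x"
proof -
  have "disc_points X f \<subseteq> X closure_of (disc_points X f)"
    by (rule closure_of_subset) (auto simp: disc_points_def)
  then show ?thesis using assms unfolding disc_points_def by auto
qed

theorem theorem6p4:
  fixes X :: "'a topology" and \<P> :: "'a set set"
  assumes "t1_space X" and "closed_ideal X \<P>"
  shows "CP_regular X \<P> \<longleftrightarrow>
    (\<forall>Z\<in>zero_sets_P X \<P>. \<exists>P\<in>\<P>.
        closedin (subtopology X (topspace X - P)) (Z - P) \<and>
        openin (subtopology X (topspace X - P)) (Z - P))"
proof -
  have iclosed: "\<And>P. P \<in> \<P> \<Longrightarrow> closedin X P" and iunion: "\<And>P Q. P \<in> \<P> \<Longrightarrow> Q \<in> \<P> \<Longrightarrow> P \<union> Q \<in> \<P>"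
    and idown: "\<And>P Q. P \<in> \<P> \<Longrightarrow> closedin X Q \<Longrightarrow> Q \<subseteq> P \<Longrightarrow> Q \<in> \<P>"
    using assms(2) unfolding closed_ideal_def by blast+
  show ?thesis
  proof
  assume reg: "CP_regular X \<P>"
  show "\<forall>Z\<in>zero_sets_P X \<P>. \<exists>P\<in>\<P>.
        closedin (subtopology X (topspace X - P)) (Z - P) \<and>
        openin (subtopology X (topspace X - P)) (Z - P)"
  proof
    fix Z assume "Z \<in> zero_sets_P X \<P>"
    then obtain f where f: "f \<in> CP X \<P>" and Z: "Z = zero_set_P X f"
      unfolding zero_sets_P_def by auto
    obtain g where g: "g \<in> CP X \<P>" and fg: "\<forall>x\<in>topspace X. f x = (f x)^2 * g x"
      using reg f unfolding CP_regular_def by auto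
    define P where "P = X closure_of (disc_points X f) \<union> X closure_of (disc_points X g)"
    have PP: "P \<in> \<P>" using f g iunion unfolding P_def CP_def by blast
    define S where "S = topspace X - P"
    have topS: "topspace (subtopology X S) = S" unfolding S_def by auto
    have cf: "cont_at X f x" if "x \<in> S" for x
      using that unfolding S_def P_def by (intro not_disc) auto
    have cg: "cont_at X g x" if "x \<in> S" for x
      using that unfolding S_def P_def by (intro not_disc) auto
    have op: "openin (subtopology X S) (Z - P)"
    proof (subst openin_subopen, intro ballI)
      fix x assume x: "x \<in> Z - P"
      then have xS: "x \<in> S" and fx: "f x = 0" using Z unfolding zero_set_P_def S_def by auto
      define M where "M = \<bar>g x\<bar> + 1"
      have M: "M > 0" unfolding M_def by auto
      obtain V2 where V2: "openin X V2" "x \<in> V2" "g ` V2 \<subseteq> ball (g x) 1"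
        using cg[OF xS] unfolding cont_at_def
        by (meson centre_in_ball open_ball zero_less_one)
      obtain V1 where V1: "openin X V1" "x \<in> V1" "f ` V1 \<subseteq> ball (f x) (1/M)"
        proof -
        have "1/M > 0" using M by simp
        then show ?thesis using cf[OF xS] that unfolding cont_at_def
          by (meson centre_in_ball open_ball)
      qed
      define T where "T = V1 \<inter> V2 \<inter> S"
      have "openin (subtopology X S) T"
        unfolding T_def openin_subtopology using V1 V2 by blast
      moreover have "x \<in> T" using V1 V2 xS T_def by auto
      moreover have "T \<subseteq> Z - P"
      proof
        fix y assume y: "y \<in> T"
        then have yX: "y \<in> topspace X" "y \<notin> P" unfolding T_def S_def by auto
        have gy: "\<bar>g y\<bar> < M" using V2 y unfolding T_def M_def by (auto simp: dist_real_def)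
        have fy: "\<bar>f y\<bar> < 1/M" using V1 y fx unfolding T_def by (auto simp: dist_real_def)
        have "f y = 0"
        proof (rule ccontr)
          assume nz: "f y \<noteq> 0"
          have "f y = f y * (f y * g y)" using fg yX by (simp add: power2_eq_square)
          then have one: "f y * g y = 1" using nz by simp
          have "\<bar>f y\<bar> * \<bar>g y\<bar> \<le> \<bar>f y\<bar> * M" using gy by (simp add: mult_left_mono)
          also have "\<dots> < 1/M * M" using fy M by (intro mult_strict_right_mono) auto
          also have "\<dots> = 1" using M by simp
          finally have "\<bar>f y * g y\<bar> < 1" by (simp add: abs_mult)
          then show False using one by simp
        qed
        then show "y \<in> Z - P" using yX Z unfolding zero_set_P_def by auto
      qed
      ultimately show "\<exists>T. openin (subtopology X S) T \<and> x \<in> T \<and> T \<subseteq> Z - P" by blast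
    qed
    have cl: "closedin (subtopology X S) (Z - P)"
      unfolding closedin_def topS
    proof
      show "Z - P \<subseteq> S" using Z unfolding zero_set_P_def S_def by auto
      show "openin (subtopology X S) (S - (Z - P))"
      proof (subst openin_subopen, intro ballI)
        fix x assume x: "x \<in> S - (Z - P)"
        then have xS: "x \<in> S" and fx: "f x \<noteq> 0" using Z unfolding zero_set_P_def S_def by auto
        obtain V where V: "openin X V" "x \<in> V" "f ` V \<subseteq> - {0}"
          proof -
          have "open (- {0::real})" "f x \<in> - {0}" using fx by auto
          then show ?thesis using cf[OF xS] that unfolding cont_at_def by blast
        qed
        have "openin (subtopology X S) (V \<inter> S)"
          unfolding openin_subtopology using V by blast
        moreover have "V \<inter> S \<subseteq> S - (Z - P)" using V Z unfolding zero_set_P_def by auto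
        ultimately show "\<exists>T. openin (subtopology X S) T \<and> x \<in> T \<and> T \<subseteq> S - (Z - P)"
          using V xS by blast
      qed
    qed
    show "\<exists>P\<in>\<P>. closedin (subtopology X (topspace X - P)) (Z - P) \<and>
        openin (subtopology X (topspace X - P)) (Z - P)"
      using PP op cl unfolding S_def by blast
  qed
next
  assume H: "\<forall>Z\<in>zero_sets_P X \<P>. \<exists>P\<in>\<P>.
        closedin (subtopology X (topspace X - P)) (Z - P) \<and>
        openin (subtopology X (topspace X - P)) (Z - P)"
  show "CP_regular X \<P>"
    unfolding CP_regular_def
  proof
    fix f assume f: "f \<in> CP X \<P>"
    define Z where "Z = zero_set_P X f"
    have "Z \<in> zero_sets_P X \<P>" using f unfolding Z_def zero_sets_P_def by auto
    then obtain P where PP: "P \<in> \<P>" and op: "openin (subtopology X (topspace X - P)) (Z - P)"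
      using H by blast
    define S where "S = topspace X - P"
    have Pcl: "closedin X P" using PP iclosed by blast
    have Sop: "openin X S" unfolding S_def using Pcl by (simp add: openin_diff)
    obtain T where T: "openin X T" "Z - P = T \<inter> S"
      using op unfolding openin_subtopology S_def by blast
    define g where "g = (\<lambda>x. inverse (f x))"
    define Q where "Q = X closure_of (disc_points X f) \<union> P"
    have Qcl: "closedin X Q" unfolding Q_def using Pcl by auto
    have QP: "Q \<in> \<P>" using f PP iunion unfolding Q_def CP_def by blast
    have DQ: "disc_points X g \<subseteq> Q"
    proof
      fix x assume x: "x \<in> disc_points X g"
      then have xX: "x \<in> topspace X" and nc: "\<not> cont_at X g x" unfolding disc_points_def by auto
      show "x \<in> Q"
      proof (rule ccontr)
        assume xQ: "x \<notin> Q"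
        have cf: "cont_at X f x" using xX xQ unfolding Q_def by (intro not_disc) auto
        show False
        proof (cases "f x = 0")
          case False
          have "isCont inverse (f x)" using False by (intro continuous_intros) auto
          then have "cont_at X g x" unfolding g_def by (rule cont_at_comp[OF cf])
          then show False using nc by simp
        next
          case True
          have "x \<in> Z - P" using True xX xQ unfolding Z_def zero_set_P_def Q_def by simp
          then have xW: "x \<in> T \<inter> S" using T(2) by simp
          have W: "openin X (T \<inter> S)" using T(1) Sop by auto
          have TZ: "T \<inter> S \<subseteq> Z" using T(2) by blast
          have "\<forall>y\<in>T \<inter> S. g y = 0"
          proof
            fix y assume "y \<in> T \<inter> S"
            then have "y \<in> Z" using TZ by blast
            then show "g y = 0" unfolding Z_def zero_set_P_def g_def by simp
          qed
          then have gW: "g ` (T \<inter> S) \<subseteq> {0}" by blast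
          have gx: "g x = 0" using xW gW by blast
          have "cont_at X g x" unfolding cont_at_def
          proof (intro allI impI)
            fix U :: "real set" assume "open U \<and> g x \<in> U"
            then have "{0} \<subseteq> U" using gx by simp
            then show "\<exists>V. openin X V \<and> x \<in> V \<and> g ` V \<subseteq> U"
              using xW W gW by blast
          qed
          then show False using nc by simp
        qed
      qed
    qed
    have "X closure_of (disc_points X g) \<subseteq> Q"
      by (rule closure_of_minimal[OF DQ Qcl])
    then have "X closure_of (disc_points X g) \<in> \<P>"
      by (rule idown[OF QP closedin_closure_of])
    then have "g \<in> CP X \<P>" unfolding CP_def by simp
    moreover have "\<forall>x\<in>topspace X. f x = (f x)^2 * g x"
      unfolding g_def
    proof
      fix x show "f x = (f x)^2 * inverse (f x)" by (cases "f x = 0") (simp_all add: power2_eq_square)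
    qed
    ultimately show "\<exists>g\<in>CP X \<P>. \<forall>x\<in>topspace X. f x = (f x)^2 * g x" by blast
  qed
qed
qed

end
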